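(* Let $q>0$, $q\neq1$. For every integer $N\ge0$, the $q$-Hermite polynomial $H_N(x;q)$ satisfies, for all real $x\neq0$, $$2D_x^2H_N(x;q)-[2]_q^2\,x\frac{d}{dx}H_N(x;q)+[2]_q^2\,N\,H_N(x;q)=0 .$$
   Context: For $n\ge 0$ let $[n]_q=\frac{q^n-1}{q-1}$, $[0]_q!=1$, $[n]_q!=[1]_q\cdots[n]_q$, and $e_q(z)=\sum_{n\ge0}z^n/[n]_q!$. The $q$-derivative is $D_xf(x)=\frac{f(qx)-f(x)}{(q-1)x}$ and $D_x^2=D_x\circ D_x$. The $q$-Hermite polynomials $H_N(x;q)$ are defined by the identity of formal power series in $t$: $e^{-t^2}e_q([2]_q t x)=\sum_{N\ge0}H_N(x;q)\,t^N/[N]_q!$. *)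

theory Defs
  imports "HOL-Analysis.Analysis" "HOL-Computational_Algebra.Formal_Power_Series"
begin

definition qint :: "real \<Rightarrow> nat \<Rightarrow> real" where
  "qint q n = (q ^ n - 1) / (q - 1)"

definition qfact :: "real \<Rightarrow> nat \<Rightarrow> real" where
  "qfact q n = (\<Prod>k=1..n. qint q k)"

text \<open>The q-exponential e_q(z) as a formal power series in t, evaluated at z = c t.\<close>
definition eq_fps :: "real \<Rightarrow> real \<Rightarrow> real fps" where
  "eq_fps q c = Abs_fps (\<lambda>n. c ^ n / qfact q n)"

definition qHermite_gf :: "real \<Rightarrow> real \<Rightarrow> real fps" where
  "qHermite_gf q x = (fps_exp (-1) oo (fps_X ^ 2)) * eq_fps q (qint q 2 * x)"

definition qHermite :: "nat \<Rightarrow> real \<Rightarrow> real \<Rightarrow> real" where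
  "qHermite N x q = qfact q N * fps_nth (qHermite_gf q x) N"

definition qD :: "real \<Rightarrow> (real \<Rightarrow> real) \<Rightarrow> real \<Rightarrow> real" where
  "qD q f x = (f (q * x) - f x) / ((q - 1) * x)"

end

theory Submission
  imports Defs
begin
definition gg :: "nat \<Rightarrow> real" where
 "gg n = (if even n then (-1)^(n div 2) / fact (n div 2) else 0)"
lemma comp_nth: "fps_nth (fps_exp (-1::real) oo (fps_X ^ 2)) n = gg n"
proof -
  have "fps_nth (fps_exp (-1::real) oo (fps_X ^ 2)) n = (\<Sum>i=0..n. fps_nth (fps_exp (-1)) i * (if n = 2*i then 1 else 0))"
    by (simp add: fps_compose_nth power_mult[symmetric])
  also have "\<dots> = gg n"
  proof (cases "even n")
    case True
    then obtain k where k: "n = 2*k" by blast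
    have "(\<Sum>i=0..n. fps_nth (fps_exp (-1::real)) i * (if n = 2*i then 1 else 0)) = (\<Sum>i\<in>{k}. fps_nth (fps_exp (-1::real)) i)"
      by (rule sum.mono_neutral_cong_right) (auto simp: k)
    then show ?thesis using k by (simp add: gg_def)
  next
    case False
    then show ?thesis by (auto simp: gg_def intro!: sum.neutral)
  qed
  finally show ?thesis .
qed

definition ww :: "real \<Rightarrow> nat \<Rightarrow> nat \<Rightarrow> real" where
  "ww q N i = qfact q N * gg i * qint q 2 ^ (N - i) / qfact q (N - i)"

lemma qHermite_explicit: "qHermite N y q = (\<Sum>i\<le>N. ww q N i * y ^ (N - i))"
  unfolding qHermite_def qHermite_gf_def fps_mult_nth comp_nth eq_fps_def ww_def
  by (simp add: atLeast0AtMost sum_distrib_left power_mult_distrib mult_ac)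

lemma qint_nz: "q > 0 \<Longrightarrow> q \<noteq> 1 \<Longrightarrow> k \<ge> 1 \<Longrightarrow> qint q k \<noteq> 0"
  unfolding qint_def using power_eq_1_iff[of q k] by auto

lemma qfact_nz: "q > 0 \<Longrightarrow> q \<noteq> 1 \<Longrightarrow> qfact q k \<noteq> 0"
  unfolding qfact_def using qint_nz by auto

lemma qfact_Suc: "qfact q (Suc k) = qfact q k * qint q (Suc k)"
  unfolding qfact_def by simp

lemma qint0: "qint q 0 = 0" by (simp add: qint_def)

lemma qD_pow: "y \<noteq> 0 \<Longrightarrow> q \<noteq> 1 \<Longrightarrow> qD q (\<lambda>y. y ^ m) y = qint q m * y ^ (m - 1)"
proof (cases m)
  case 0 then show ?thesis by (simp add: qD_def qint_def)
next
  case (Suc k)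
  assume "y \<noteq> 0" "q \<noteq> 1"
  then show ?thesis unfolding qD_def qint_def Suc
    by (simp add: power_mult_distrib field_simps)
qed

lemma qD_poly: "y \<noteq> 0 \<Longrightarrow> q \<noteq> 1 \<Longrightarrow>
  qD q (\<lambda>y. \<Sum>i\<in>A. a i * y ^ (e i)) y = (\<Sum>i\<in>A. a i * qint q (e i) * y ^ (e i - 1))"
proof -
  assume h: "y \<noteq> 0" "q \<noteq> 1"
  have "qD q (\<lambda>y. \<Sum>i\<in>A. a i * y ^ (e i)) y = (\<Sum>i\<in>A. a i * qD q (\<lambda>y. y ^ (e i)) y)"
    unfolding qD_def by (simp add: sum_subtractf[symmetric] sum_divide_distrib right_diff_distrib)
  then show ?thesis using qD_pow[OF h] by (simp add: mult.assoc)
qed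

lemma shift: fixes N :: nat shows "(\<Sum>j\<le>N+2. (if 2 \<le> j then F (j - 2) else (0::real))) = (\<Sum>i\<le>N. F i)"
  by (induction N arbitrary: F) (auto simp: numeral_2_eq_2)

lemma coef:
  assumes q: "q > 0" "q \<noteq> 1" and j: "j \<le> N"
  shows "2 * (if 2 \<le> j then ww q N (j-2) * qint q (N-(j-2)) * qint q (N-(j-2)-1) else 0)
         + (qint q 2)^2 * real j * ww q N j = 0"
proof (cases "2 \<le> j")
  case False
  then have "j = 0 \<or> j = 1" by auto
  then show ?thesis using False by (auto simp: ww_def gg_def)
next
  case True
  show ?thesis
  proof (cases "even j")
    case False
    then have "odd (j-2)" using True by (simp add: even_diff_nat)
    then show ?thesis using False by (simp add: ww_def gg_def)
  next
    case ev: True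
    then obtain k where k: "j = 2*k + 2" using True
      by (metis add.commute dvd_def le_add_diff_inverse mult_2 even_add even_diff_nat
            le_add_diff_inverse2 dvd_refl)
    obtain m where m: "N = m + 2*k + 2" using j k by (metis add.commute le_Suc_ex add.assoc)
    have g1: "gg (2*k+2) * (real k + 1) = - gg (2*k)"
    proof -
      have "(2*k+2) div 2 = Suc k" "(2*k) div 2 = k" by auto
      moreover have "(fact (Suc k)::real) = (real k + 1) * fact k" by (simp add: fact_Suc)
      moreover have "(fact k::real) \<noteq> 0" by simp
      moreover have "(fact k::real) + fact k * real k \<noteq> 0"
        by (metis add_pos_nonneg fact_gt_zero mult_nonneg_nonneg fact_ge_zero of_nat_0_le_iff less_numeral_extra(3))
      ultimately show ?thesis by (simp add: gg_def field_simps)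
    qed
    have fm2: "qfact q (m+2) = qfact q m * qint q (m+1) * qint q (m+2)"
      using qfact_Suc[of q "Suc m"] qfact_Suc[of q m] by (simp add: numeral_2_eq_2)
    have nz: "qfact q m \<noteq> 0" "qint q (m+1) \<noteq> 0" "qint q (m+2) \<noteq> 0"
      using qfact_nz[OF q] qint_nz[OF q] by auto
    have e1: "N - (j-2) = m + 2" "N - (j-2) - 1 = m+1" "N - j = m" "j - 2 = 2*k" using k m by auto
    have "2 * (ww q N (2*k) * qint q (m+2) * qint q (m+1)) + (qint q 2)^2 * real j * ww q N j
       = 2 * qfact q N * qint q 2 ^ (m+2) / qfact q m * (gg (2*k) + gg (2*k+2) * (real k + 1))"
    proof -
      have a: "ww q N (2*k) = qfact q N * gg (2*k) * qint q 2 ^ (m+2) / (qfact q m * qint q (m+1) * qint q (m+2))"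
        unfolding ww_def fm2[symmetric] using m by (simp add: algebra_simps)
      have b: "ww q N j = qfact q N * gg (2*k+2) * qint q 2 ^ m / qfact q m"
        unfolding ww_def using m k by simp
      show ?thesis unfolding a b using nz k by (simp add: field_simps power_add power2_eq_square)
    qed
    also have "\<dots> = 0" using g1 by simp
    finally show ?thesis using True e1 by simp
  qed
qed
lemma qD_cong: "f (q*x) = g (q*x) \<Longrightarrow> f x = g x \<Longrightarrow> qD q f x = qD q g x"
  by (simp add: qD_def)

theorem mainTheorem6:
  fixes q x :: real and N :: nat
  assumes "q > 0" and "q \<noteq> 1" and "x \<noteq> 0"
  shows "2 * qD q (qD q (\<lambda>y. qHermite N y q)) x
           - (qint q 2)^2 * x * deriv (\<lambda>y. qHermite N y q) x
           + (qint q 2)^2 * real N * qHermite N x q = 0"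
proof -
  note q = assms(1,2)
  define w where "w = ww q N"
  define c2 where "c2 = (qint q 2)^2"
  have H: "(\<lambda>y. qHermite N y q) = (\<lambda>y. \<Sum>i\<le>N. w i * y ^ (N - i))"
    unfolding w_def by (simp add: qHermite_explicit)
  have hx: "qHermite N x q = (\<Sum>i\<le>N. w i * x^(N-i))" by (simp add: w_def qHermite_explicit)
  have D1: "qD q (\<lambda>y. qHermite N y q) y = (\<Sum>i\<le>N. (w i * qint q (N - i)) * y ^ (N - i - 1))"
    if "y \<noteq> 0" for y
    unfolding H using qD_poly[OF that assms(2), of w "\<lambda>i. N - i" "{..N}"] by simp
  have qx: "q * x \<noteq> 0" using assms by simp
  have D2: "qD q (qD q (\<lambda>y. qHermite N y q)) x
      = (\<Sum>i\<le>N. w i * qint q (N - i) * qint q (N - i - 1) * x ^ (N - i - 1 - 1))"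
  proof -
    have "qD q (qD q (\<lambda>y. qHermite N y q)) x
        = qD q (\<lambda>y. \<Sum>i\<le>N. (w i * qint q (N - i)) * y ^ (N - i - 1)) x"
      using D1[OF qx] D1[OF assms(3)] by (intro qD_cong) simp_all
    also have "\<dots> = (\<Sum>i\<le>N. w i * qint q (N - i) * qint q (N - i - 1) * x ^ (N - i - 1 - 1))"
      using qD_poly[OF assms(3) assms(2), of "\<lambda>i. w i * qint q (N - i)" "\<lambda>i. N - i - 1" "{..N}"]
      by simp
    finally show ?thesis .
  qed
  have DV: "deriv (\<lambda>y. qHermite N y q) x = (\<Sum>i\<le>N. w i * (real (N - i) * x ^ (N - i - 1)))"
    unfolding H
    by (rule DERIV_imp_deriv) (intro DERIV_sum DERIV_cmult, rule DERIV_pow[THEN DERIV_cong], simp)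
  have xd: "x * deriv (\<lambda>y. qHermite N y q) x = (\<Sum>i\<le>N. w i * real (N - i) * x ^ (N - i))"
    unfolding DV sum_distrib_left
  proof (rule sum.cong[OF refl])
    fix i assume "i \<in> {..N}"
    show "x * (w i * (real (N - i) * x ^ (N - i - 1))) = w i * real (N - i) * x ^ (N - i)"
      by (cases "N - i") (auto)
  qed
  define F where "F i = w i * qint q (N - i) * qint q (N - i - 1) * x ^ (N - i - 1 - 1)" for i
  have S2: "(\<Sum>i\<le>N. F i) = (\<Sum>j\<le>N. if 2 \<le> j then F (j - 2) else 0)"
  proof (cases "N < 2")
    case True
    then have "F i = 0" if "i \<le> N" for i using that by (auto simp: F_def qint0 less_Suc_eq numeral_2_eq_2 le_Suc_eq)
    then show ?thesis using True by auto
  next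
    case False
    then obtain M where M: "N = M + 2" by (metis add.commute le_Suc_ex not_less)
    have "F (M+1) = 0" "F (M+2) = 0" by (auto simp: F_def qint0 M)
    then have "(\<Sum>i\<le>N. F i) = (\<Sum>i\<le>M. F i)" by (simp add: M numeral_2_eq_2)
    then show ?thesis using shift[of F M] M by simp
  qed
  have "2 * qD q (qD q (\<lambda>y. qHermite N y q)) x
           - c2 * x * deriv (\<lambda>y. qHermite N y q) x
           + c2 * real N * qHermite N x q
        = (\<Sum>j\<le>N. (2 * (if 2 \<le> j then w (j-2) * qint q (N-(j-2)) * qint q (N-(j-2)-1) else 0)
                + c2 * real j * w j) * x ^ (N - j))"
  proof -
    have a: "2 * qD q (qD q (\<lambda>y. qHermite N y q)) x = (\<Sum>j\<le>N. 2 * (if 2 \<le> j then w (j-2) * qint q (N-(j-2)) * qint q (N-(j-2)-1) else 0) * x ^ (N - j))"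
      unfolding D2 F_def[symmetric] S2 sum_distrib_left
      by (rule sum.cong[OF refl]) (auto simp: F_def)
    have b: "- c2 * (x * deriv (\<lambda>y. qHermite N y q) x) + c2 * real N * qHermite N x q
        = (\<Sum>j\<le>N. c2 * real j * w j * x ^ (N - j))"
      unfolding xd hx sum_distrib_left sum_negf[symmetric] sum.distrib[symmetric]
      by (rule sum.cong[OF refl]) (auto simp: algebra_simps of_nat_diff)
    show ?thesis using a b by (simp add: sum.distrib algebra_simps)
  qed
  also have "\<dots> = 0"
    using coef[OF q] unfolding w_def c2_def by (intro sum.neutral) auto
  finally show ?thesis unfolding c2_def .
qed
end
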